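(* Let $A_2\in\mathbf{C}^{n\times n}$. The discrete-time antilinear system $x(t+1)=A_2^{\#}x(t)^{\#}$, $t\in\mathbf{Z}^+$, is asymptotically stable if and only if $A_2^{\#}A_2$ is Schur, i.e. $\rho(A_2^{\#}A_2)<1$. The continuous-time antilinear system $\dot x(t)=A_2^{\#}x(t)^{\#}$, $t\in\mathbf{R}^+$, is not asymptotically stable for any $A_2\in\mathbf{C}^{n\times n}$.
   Context: $P^{\#}$ denotes entrywise conjugate and $\rho(\cdot)$ the spectral radius. A system is stable if for each $\delta>0$ there is $\varepsilon>0$ with $\|x_0\|\le\varepsilon\Rightarrow\|x(t)\|\le\delta$ for all $t\ge0$, and asymptotically stable if it is stable and, for each $\epsilon>0$ (and such initial states), there is $\eta$ with $\|x(t)\|\le\epsilon$ for all $t\ge\eta$ (equivalently, all solutions tend to zero). *)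

theory Defs
  imports "HOL-Analysis.Analysis"
begin

definition vconj :: "complex^'n \<Rightarrow> complex^'n" where
  "vconj x = (\<chi> i. cnj (x $ i))"

definition mconj :: "complex^'n^'m \<Rightarrow> complex^'n^'m" where
  "mconj A = (\<chi> i j. cnj (A $ i $ j))"

definition eigenvalues :: "complex^'n^'n \<Rightarrow> complex set" where
  "eigenvalues A = {c. \<exists>v. v \<noteq> 0 \<and> A *v v = c *s v}"

definition spectral_radius :: "complex^'n^'n \<Rightarrow> real" where
  "spectral_radius A = Sup (cmod ` eigenvalues A)"

definition schur :: "complex^'n^'n \<Rightarrow> bool" where
  "schur A \<longleftrightarrow> spectral_radius A < 1"

primrec dt_sol :: "complex^'n^'n \<Rightarrow> complex^'n \<Rightarrow> nat \<Rightarrow> complex^'n" where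
  "dt_sol A x0 0 = x0"
| "dt_sol A x0 (Suc t) = mconj A *v vconj (dt_sol A x0 t)"

definition dt_stable :: "complex^'n^'n \<Rightarrow> bool" where
  "dt_stable A \<longleftrightarrow> (\<forall>\<delta>>0. \<exists>\<epsilon>>0. \<forall>x0. norm x0 \<le> \<epsilon> \<longrightarrow> (\<forall>t. norm (dt_sol A x0 t) \<le> \<delta>))"

definition dt_asymp_stable :: "complex^'n^'n \<Rightarrow> bool" where
  "dt_asymp_stable A \<longleftrightarrow> dt_stable A \<and> (\<forall>x0. dt_sol A x0 \<longlonglongrightarrow> 0)"

definition ct_solution :: "complex^'n^'n \<Rightarrow> (real \<Rightarrow> complex^'n) \<Rightarrow> bool" where
  "ct_solution A x \<longleftrightarrow>
     (\<forall>t\<ge>0. (x has_vector_derivative (mconj A *v vconj (x t))) (at t within {0..}))"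

definition ct_stable :: "complex^'n^'n \<Rightarrow> bool" where
  "ct_stable A \<longleftrightarrow> (\<forall>\<delta>>0. \<exists>\<epsilon>>0. \<forall>x. ct_solution A x \<and> norm (x 0) \<le> \<epsilon> \<longrightarrow>
        (\<forall>t\<ge>0. norm (x t) \<le> \<delta>))"

definition ct_asymp_stable :: "complex^'n^'n \<Rightarrow> bool" where
  "ct_asymp_stable A \<longleftrightarrow> ct_stable A \<and> (\<forall>x. ct_solution A x \<longrightarrow> (x \<longlongrightarrow> 0) at_top)"

end

theory Submission
  imports Defs "Jordan_Normal_Form.Spectral_Radius"
begin


lemma vconj_vconj[simp]: "vconj (vconj x) = x"
  by (simp add: vconj_def Finite_Cartesian_Product.vec_eq_iff)

lemma mconj_mconj[simp]: "mconj (mconj x) = x"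
  by (simp add: mconj_def Finite_Cartesian_Product.vec_eq_iff)

lemma vconj_mult: "vconj (M *v x) = mconj M *v vconj x"
  by (simp add: vconj_def mconj_def Finite_Cartesian_Product.vec_eq_iff matrix_vector_mult_def cnj_sum)

lemma vconj_add: "vconj (x + y) = vconj x + vconj y"
  by (simp add: vconj_def Finite_Cartesian_Product.vec_eq_iff)

lemma vconj_smult: "vconj (c *s x) = cnj c *s vconj x"
  by (simp add: vconj_def Finite_Cartesian_Product.vec_eq_iff)

definition smat :: "complex \<Rightarrow> complex^'n^'m \<Rightarrow> complex^'n^'m" where
  "smat c B = (\<chi> i j. c * B $ i $ j)"

lemma smult_matrix_vector: "(smat c B) *v v = c *s (B *v (v::complex^'n))"
  by (simp add: smat_def Finite_Cartesian_Product.vec_eq_iff matrix_vector_mult_def sum_distrib_left mult.assoc)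

lemma norm_vconj[simp]: "norm (vconj x) = norm x"
  by (simp add: vconj_def norm_vec_def)

lemma norm_smult_vec: "norm (c *s (x::complex^'n)) = cmod c * norm x"
  by (simp add: norm_vec_def norm_mult L2_set_right_distrib)

lemma norm_le_sum_cart: "norm (x::complex^'n) \<le> (\<Sum>i\<in>UNIV. cmod (x $ i))"
  unfolding norm_vec_def by (rule L2_set_le_sum) auto

lemma matrix_vector_bound:
  fixes M :: "complex^'n^'m"
  shows "norm (M *v x) \<le> (\<Sum>i\<in>UNIV. \<Sum>j\<in>UNIV. cmod (M $ i $ j)) * norm x"
proof -
  have "norm (M *v x) \<le> (\<Sum>i\<in>UNIV. cmod ((M *v x) $ i))" by (rule norm_le_sum_cart)
  also have "\<dots> \<le> (\<Sum>i\<in>UNIV. \<Sum>j\<in>UNIV. cmod (M $ i $ j) * norm x)"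
  proof (rule sum_mono)
    fix i
    have "cmod ((M *v x) $ i) \<le> (\<Sum>j\<in>UNIV. cmod (M $ i $ j * x $ j))"
      unfolding matrix_vector_mult_def by (simp add: norm_sum)
    also have "\<dots> \<le> (\<Sum>j\<in>UNIV. cmod (M $ i $ j) * norm x)"
      by (rule sum_mono) (simp add: norm_mult mult_left_mono Finite_Cartesian_Product.norm_nth_le)
    finally show "cmod ((M *v x) $ i) \<le> (\<Sum>j\<in>UNIV. cmod (M $ i $ j) * norm x)" .
  qed
  also have "\<dots> = (\<Sum>i\<in>UNIV. \<Sum>j\<in>UNIV. cmod (M $ i $ j)) * norm x"
    by (simp add: sum_distrib_right)
  finally show ?thesis .
qed

lemma dt_sol_SS: "dt_sol A x (Suc (Suc t)) = (mconj A ** A) *v dt_sol A x t"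
  by (simp add: vconj_mult matrix_vector_mul_assoc)

lemma dt_sol_even: "dt_sol A x (2*k) = (((*v) (mconj A ** A)) ^^ k) x"
proof (induction k)
  case 0 then show ?case by simp
next
  case (Suc k)
  have "2 * Suc k = Suc (Suc (2*k))" by simp
  then show ?case using Suc by (simp only: dt_sol_SS) simp
qed

lemma dt_sol_odd: "dt_sol A x (Suc (2*k)) = mconj A *v vconj ((((*v) (mconj A ** A)) ^^ k) x)"
  by (simp add: dt_sol_even[symmetric])

lemma funpow_smult:
  fixes B :: "complex^'n^'n"
  shows "(((*v) (smat c B)) ^^ k) x = c ^ k *s (((*v) B) ^^ k) x"
proof (induction k)
  case (Suc k)
  have "(((*v) (smat c B)) ^^ Suc k) x = smat c B *v ((((*v) (smat c B)) ^^ k) x)" by simp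
  also have "\<dots> = c ^ Suc k *s (((*v) B) ^^ Suc k) x"
    by (simp only: Suc smult_matrix_vector vector_scalar_commute vector_smult_assoc) simp
  finally show ?case .
qed simp

lemma funpow_eig: "B *v v = c *s v \<Longrightarrow> (((*v) B) ^^ k) (v::complex^'n) = c ^ k *s v"
  by (induction k) (simp_all add: vector_scalar_commute vector_smult_assoc mult.commute)

definition toV :: "(nat \<Rightarrow> 'n) \<Rightarrow> complex^'n::finite \<Rightarrow> complex Matrix.vec" where
  "toV h x = Matrix.vec CARD('n) (\<lambda>k. x $ h k)"

definition toM :: "(nat \<Rightarrow> 'n) \<Rightarrow> complex^'n^'n::finite \<Rightarrow> complex Matrix.mat" where
  "toM h B = Matrix.mat CARD('n) CARD('n) (\<lambda>(i,j). B $ h i $ h j)"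

lemma toM_carrier: "toM h (B::complex^'n::finite^'n) \<in> carrier_mat CARD('n) CARD('n)"
  by (simp add: toM_def)

lemma toV_carrier: "toV h (x::complex^'n) \<in> carrier_vec CARD('n)"
  by (simp add: toV_def)

context
  fixes h :: "nat \<Rightarrow> 'n::finite"
  assumes h: "bij_betw h {0..<CARD('n)} UNIV"
begin

lemma toV_mult: "toV h (B *v x) = toM h B *\<^sub>v toV h x"
proof (rule eq_vecI)
  fix i assume "i < dim_vec (toM h B *\<^sub>v toV h x)"
  then have i: "i < CARD('n)" by (simp add: toM_def)
  have "(toM h B *\<^sub>v toV h x) $ i = (\<Sum>j\<in>{0..<CARD('n)}. B $ h i $ h j * x $ h j)"
    using i by (simp add: toM_def toV_def scalar_prod_def index_mult_mat_vec)
  also have "\<dots> = (\<Sum>j\<in>UNIV. B $ h i $ j * x $ j)"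
    by (rule sum.reindex_bij_betw[OF h])
  finally show "toV h (B *v x) $ i = (toM h B *\<^sub>v toV h x) $ i"
    using i by (simp add: toV_def matrix_vector_mult_def)
qed (simp add: toV_def toM_def)

lemma toV_inj: "toV h x = toV h y \<Longrightarrow> x = y"
proof -
  assume e: "toV h x = toV h y"
  show "x = y" unfolding Finite_Cartesian_Product.vec_eq_iff
  proof
    fix i
    obtain k where k: "k < CARD('n)" "h k = i" using h unfolding bij_betw_def
      by (metis UNIV_I atLeastLessThan_iff imageE)
    have "toV h x $ k = toV h y $ k" using e by simp
    then show "x $ i = y $ i" using k by (simp add: toV_def)
  qed
qed

lemma toV_surj: "u \<in> carrier_vec CARD('n) \<Longrightarrow> \<exists>x. toV h x = u"
proof -
  assume u: "u \<in> carrier_vec CARD('n)"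
  define g where "g = inv_into {0..<CARD('n)} h"
  have g: "k < CARD('n) \<Longrightarrow> g (h k) = k" for k
    unfolding g_def using h by (simp add: bij_betw_def)
  show ?thesis
    by (rule exI[of _ "\<chi> i. u $ g i"]) (use u g in \<open>auto simp: toV_def intro!: eq_vecI\<close>)
qed

lemma toV_smult: "toV h (c *s x) = c \<cdot>\<^sub>v toV h x"
  by (rule eq_vecI) (auto simp: toV_def)

lemma toV_zero: "toV h 0 = 0\<^sub>v CARD('n)"
  by (rule eq_vecI) (auto simp: toV_def)

lemma eigenvalues_spectrum: "eigenvalues (B::complex^'n^'n) = spectrum (toM h B)"
proof (intro equalityI subsetI)
  fix c assume "c \<in> eigenvalues B"
  then obtain v where v: "v \<noteq> 0" "B *v v = c *s v" by (auto simp: eigenvalues_def)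
  have "toV h v \<noteq> 0\<^sub>v CARD('n)" using v(1) toV_inj toV_zero by metis
  moreover have "toM h B *\<^sub>v toV h v = c \<cdot>\<^sub>v toV h v"
    using v(2) by (metis toV_mult toV_smult)
  ultimately show "c \<in> spectrum (toM h B)"
    unfolding spectrum_def eigenvalue_def eigenvector_def
    by (auto simp: toV_carrier toM_def intro!: exI[of _ "toV h v"])
next
  fix c assume "c \<in> spectrum (toM h B)"
  then obtain u where u: "u \<in> carrier_vec CARD('n)" "u \<noteq> 0\<^sub>v CARD('n)" "toM h B *\<^sub>v u = c \<cdot>\<^sub>v u"
    unfolding spectrum_def eigenvalue_def eigenvector_def by (auto simp: toM_def)
  obtain v where v: "toV h v = u" using toV_surj[OF u(1)] by blast
  have "v \<noteq> 0" using v u(2) toV_zero by auto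
  moreover have "B *v v = c *s v"
    using u(3) v by (intro toV_inj) (simp add: toV_mult toV_smult)
  ultimately show "c \<in> eigenvalues B" by (auto simp: eigenvalues_def)
qed

lemma toV_pow: "toV h ((((*v) (B::complex^'n^'n)) ^^ k) x) = (toM h B ^\<^sub>m k) *\<^sub>v toV h x"
proof (induction k arbitrary: x)
  case 0 then show ?case by (simp add: toM_def toV_carrier)
next
  case (Suc k)
  have "toV h ((((*v) B) ^^ Suc k) x) = toV h ((((*v) B) ^^ k) (B *v x))"
    by (simp add: funpow_Suc_right del: funpow.simps)
  also have "\<dots> = (toM h B ^\<^sub>m k) *\<^sub>v (toM h B *\<^sub>v toV h x)"
    by (simp add: Suc toV_mult)
  also have "\<dots> = (toM h B ^\<^sub>m k * toM h B) *\<^sub>v toV h x"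
    by (rule assoc_mult_mat_vec[symmetric, OF pow_carrier_mat[OF toM_carrier] toM_carrier toV_carrier])
  finally show ?case by simp
qed

end



lemma exists_h: "\<exists>h::nat \<Rightarrow> 'n::finite. bij_betw h {0..<CARD('n)} UNIV"
  using ex_bij_betw_nat_finite[of "UNIV::'n set"] by simp

lemma eig_finite: "finite (eigenvalues (B::complex^'n^'n))"
proof -
  obtain h :: "nat \<Rightarrow> 'n" where h: "bij_betw h {0..<CARD('n)} UNIV" using exists_h by blast
  show ?thesis using eigenvalues_spectrum[OF h] card_finite_spectrum(1)[OF toM_carrier] by simp
qed

lemma eig_nonempty: "eigenvalues (B::complex^'n^'n) \<noteq> {}"
proof -
  obtain h :: "nat \<Rightarrow> 'n" where h: "bij_betw h {0..<CARD('n)} UNIV" using exists_h by blast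
  show ?thesis using eigenvalues_spectrum[OF h] spectrum_non_empty[OF toM_carrier] by simp
qed

lemma sr_Max: "Defs.spectral_radius B = Max (cmod ` eigenvalues (B::complex^'n^'n))"
  unfolding Defs.spectral_radius_def
  by (rule cSup_eq_Max) (use eig_finite eig_nonempty in auto)

lemma schur_iff: "schur B \<longleftrightarrow> (\<forall>c\<in>eigenvalues (B::complex^'n^'n). cmod c < 1)"
  unfolding schur_def sr_Max using eig_finite[of B] eig_nonempty[of B] by (simp add: Max_less_iff)

lemma eig_le_sr: "c \<in> eigenvalues (B::complex^'n^'n) \<Longrightarrow> cmod c \<le> Defs.spectral_radius B"
  unfolding sr_Max using eig_finite by (intro Max_ge) auto

lemma pow_bounded:
  fixes B :: "complex^'n^'n"
  assumes ev: "\<forall>c\<in>eigenvalues B. cmod c < 1"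
  shows "\<exists>C\<ge>0. \<forall>k x. norm ((((*v) B) ^^ k) x) \<le> C * norm x"
proof -
  obtain h :: "nat \<Rightarrow> 'n" where h: "bij_betw h {0..<CARD('n)} UNIV" using exists_h by blast
  define N where "N = CARD('n)"
  define M where "M = toM h B"
  have Mc: "M \<in> carrier_mat N N" unfolding M_def N_def by (rule toM_carrier)
  have sp: "spectrum M = eigenvalues B" unfolding M_def using eigenvalues_spectrum[OF h] by simp
  have "Spectral_Radius.spectral_radius M < 1"
    unfolding Spectral_Radius.spectral_radius_def sp using ev eig_finite[of B] eig_nonempty[of B]
    by (simp add: Max_less_iff)
  from spectral_radius_jnf_norm_bound_less_1_upper_triangular[OF Mc this]
  obtain c where c: "\<And>k. norm_bound (M ^\<^sub>m k) c" by blast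
  define c' where "c' = max c 0"
  define g where "g = inv_into {0..<CARD('n)} h"
  have g: "g i < N" "h (g i) = i" for i
  proof -
    have hi: "i \<in> h ` {0..<CARD('n)}" using h by (simp add: bij_betw_def)
    show "g i < N" using inv_into_into[OF hi] unfolding g_def N_def by simp
    show "h (g i) = i" using f_inv_into_f[OF hi] unfolding g_def .
  qed
  have main: "norm ((((*v) B) ^^ k) x) \<le> (real N * real N * c') * norm x" for k x
  proof -
    define y where "y = (((*v) B) ^^ k) x"
    have Mk: "M ^\<^sub>m k \<in> carrier_mat N N" using Mc by (rule pow_carrier_mat)
    have comp: "cmod (y $ i) \<le> real N * c' * norm x" for i
    proof -
      have "y $ i = toV h y $ g i" using g by (simp add: toV_def N_def)
      also have "\<dots> = ((M ^\<^sub>m k) *\<^sub>v toV h x) $ g i"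
        unfolding y_def M_def by (simp add: toV_pow[OF h])
      also have "\<dots> = (\<Sum>j\<in>{0..<N}. (M ^\<^sub>m k) $$ (g i, j) * x $ h j)"
      proof -
        have d: "dim_row (M ^\<^sub>m k) = N" "dim_col (M ^\<^sub>m k) = N" using Mk by auto
        have "((M ^\<^sub>m k) *\<^sub>v toV h x) $ g i = row (M ^\<^sub>m k) (g i) \<bullet> toV h x"
          using g d by (simp add: index_mult_mat_vec)
        also have "\<dots> = (\<Sum>j\<in>{0..<N}. row (M ^\<^sub>m k) (g i) $ j * toV h x $ j)"
          by (simp add: scalar_prod_def toV_def N_def)
        also have "\<dots> = (\<Sum>j\<in>{0..<N}. (M ^\<^sub>m k) $$ (g i, j) * x $ h j)"
        proof (rule sum.cong)
          fix j assume j: "j \<in> {0..<N}"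
          have a: "g i < dim_row (M ^\<^sub>m k)" by (simp only: d g)
          have b: "j < dim_col (M ^\<^sub>m k)" using j by (simp only: d) simp
          show "row (M ^\<^sub>m k) (g i) $ j * toV h x $ j = (M ^\<^sub>m k) $$ (g i, j) * x $ h j"
            using index_row(1)[OF a b] j by (simp add: toV_def N_def)
        qed simp
        finally show ?thesis .
      qed
      finally have eq: "y $ i = (\<Sum>j\<in>{0..<N}. (M ^\<^sub>m k) $$ (g i, j) * x $ h j)" .
      have "cmod (y $ i) \<le> (\<Sum>j\<in>{0..<N}. cmod ((M ^\<^sub>m k) $$ (g i, j) * x $ h j))"
        unfolding eq by (rule norm_sum)
      also have "\<dots> = (\<Sum>j\<in>{0..<N}. cmod ((M ^\<^sub>m k) $$ (g i, j)) * cmod (x $ h j))"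
        by (simp only: norm_mult)
      also have "\<dots> \<le> (\<Sum>j\<in>{0..<N}. c' * norm x)"
      proof (rule sum_mono)
        fix j assume "j \<in> {0..<N}"
        then have "cmod ((M ^\<^sub>m k) $$ (g i, j)) \<le> c'"
        proof -
          have dd: "dim_row (M ^\<^sub>m k) = N" "dim_col (M ^\<^sub>m k) = N" using Mk by auto
          have cc: "\<forall>a b. a < N \<longrightarrow> b < N \<longrightarrow> norm ((M ^\<^sub>m k) $$ (a, b)) \<le> c"
            using c[of k, unfolded norm_bound_def dd] .
          have "g i < N" "j < N" using g(1) \<open>j \<in> {0..<N}\<close> by auto
          then have "norm ((M ^\<^sub>m k) $$ (g i, j)) \<le> c" using cc by blast
          then show ?thesis unfolding c'_def by linarith
        qed
        moreover have "cmod (x $ h j) \<le> norm x" by (rule Finite_Cartesian_Product.norm_nth_le)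
        ultimately show "cmod ((M ^\<^sub>m k) $$ (g i, j)) * cmod (x $ h j) \<le> c' * norm x"
          by (intro mult_mono) (auto simp: c'_def)
      qed
      finally show ?thesis by simp
    qed
    have "norm y \<le> (\<Sum>i\<in>UNIV. cmod (y $ i))" by (rule norm_le_sum_cart)
    also have "\<dots> \<le> (\<Sum>i\<in>(UNIV::'n set). real N * c' * norm x)" by (rule sum_mono) (rule comp)
    also have "\<dots> = (real N * real N * c') * norm x" by (simp add: N_def)
    finally show ?thesis unfolding y_def .
  qed
  show ?thesis by (rule exI[of _ "real N * real N * c'"]) (use main in \<open>auto simp: c'_def\<close>)
qed



lemma div2_tendsto: "(\<lambda>t::nat. (r::real) ^ (t div 2)) \<longlonglongrightarrow> 0" if "0 \<le> r" "r < 1"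
proof -
  have f: "filterlim (\<lambda>t::nat. t div 2) sequentially sequentially"
    unfolding filterlim_at_top eventually_sequentially
  proof (intro allI)
    fix Z :: nat show "\<exists>N. \<forall>n\<ge>N. Z \<le> n div 2" by (rule exI[of _ "2*Z"]) presburger
  qed
  have "(\<lambda>n. r ^ n) \<longlonglongrightarrow> 0" using that by (intro LIMSEQ_power_zero) auto
  from filterlim_compose[OF this f] show ?thesis by (simp add: o_def)
qed

lemma sr_nonneg: "0 \<le> Defs.spectral_radius (B::complex^'n^'n)"
proof -
  obtain c where "c \<in> eigenvalues B" using eig_nonempty by blast
  then show ?thesis using eig_le_sr[of c B] norm_ge_zero[of c] by linarith
qed

lemma schur_decay:
  fixes B :: "complex^'n^'n"
  assumes "schur B"
  shows "\<exists>C r. 0 \<le> C \<and> 0 < r \<and> r < 1 \<and> (\<forall>k x. norm ((((*v) B) ^^ k) x) \<le> C * r ^ k * norm x)"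
proof -
  define \<rho> where "\<rho> = Defs.spectral_radius B"
  have \<rho>: "0 \<le> \<rho>" "\<rho> < 1" using sr_nonneg assms unfolding \<rho>_def schur_def by auto
  define r where "r = (\<rho> + 1) / 2"
  have r: "0 < r" "r < 1" "\<rho> < r" using \<rho> unfolding r_def by auto
  define B' where "B' = smat (complex_of_real (1 / r)) B"
  have ev: "\<forall>c\<in>eigenvalues B'. cmod c < 1"
  proof
    fix \<mu> assume "\<mu> \<in> eigenvalues B'"
    then obtain v where v: "v \<noteq> 0" "B' *v v = \<mu> *s v" by (auto simp: eigenvalues_def)
    have "complex_of_real (1/r) *s (B *v v) = \<mu> *s v" using v(2) unfolding B'_def smult_matrix_vector .
    then have "complex_of_real r *s (complex_of_real (1/r) *s (B *v v)) = complex_of_real r *s (\<mu> *s v)"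
      by simp
    then have "B *v v = (complex_of_real r * \<mu>) *s v" using r(1)
      by (simp add: vector_smult_assoc flip: of_real_mult)
    then have "complex_of_real r * \<mu> \<in> eigenvalues B" using v(1) by (auto simp: eigenvalues_def)
    from eig_le_sr[OF this] have "r * cmod \<mu> \<le> \<rho>" unfolding \<rho>_def using r(1) by (simp add: norm_mult)
    then have "r * cmod \<mu> < r * 1" using r by linarith
    then show "cmod \<mu> < 1" using r(1) by (simp only: mult_less_cancel_left_pos)
  qed
  obtain C where C: "0 \<le> C" "\<And>k x. norm ((((*v) B') ^^ k) x) \<le> C * norm x"
    using pow_bounded[OF ev] by blast
  have "norm ((((*v) B) ^^ k) x) \<le> C * r ^ k * norm x" for k x
  proof -
    have "norm ((((*v) B') ^^ k) x) = (1/r) ^ k * norm ((((*v) B) ^^ k) x)"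
      unfolding B'_def funpow_smult norm_smult_vec using r(1) by (simp add: norm_power norm_divide)
    with C(2)[of k x] have "(1/r) ^ k * norm ((((*v) B) ^^ k) x) \<le> C * norm x" by simp
    then have "r ^ k * ((1/r) ^ k * norm ((((*v) B) ^^ k) x)) \<le> r ^ k * (C * norm x)"
      using r(1) by (intro mult_left_mono) auto
    then show ?thesis using r(1) by (simp add: power_one_over field_simps)
  qed
  then show ?thesis using C(1) r by blast
qed

lemma dt_part: "dt_asymp_stable A \<longleftrightarrow> schur (mconj A ** (A::complex^'n^'n))"
proof
  define B where "B = mconj A ** A"
  assume as: "dt_asymp_stable A"
  show "schur (mconj A ** A)"
  proof (rule ccontr)
    assume "\<not> schur (mconj A ** A)"
    then obtain c where c: "c \<in> eigenvalues B" "1 \<le> cmod c" unfolding schur_iff B_def by force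
    then obtain v where v: "v \<noteq> 0" "B *v v = c *s v" by (auto simp: eigenvalues_def)
    have lim: "dt_sol A v \<longlonglongrightarrow> 0" using as unfolding dt_asymp_stable_def by blast
    have sm: "strict_mono (\<lambda>k::nat. 2 * k)" by (simp add: strict_mono_def)
    have "(\<lambda>k. dt_sol A v (2 * k)) \<longlonglongrightarrow> 0"
      using LIMSEQ_subseq_LIMSEQ[OF lim sm] by (simp add: o_def)
    then have "(\<lambda>k. norm (dt_sol A v (2 * k))) \<longlonglongrightarrow> 0"
      using tendsto_norm_zero by blast
    moreover have "0 < norm v" using v(1) by simp
    ultimately have "\<forall>\<^sub>F k in sequentially. norm (dt_sol A v (2 * k)) < norm v"
      by (rule order_tendstoD(2))
    then obtain k where k: "norm (dt_sol A v (2 * k)) < norm v"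
      by (metis (mono_tags, lifting) eventually_sequentially order_refl)
    have "dt_sol A v (2 * k) = c ^ k *s v"
      unfolding dt_sol_even B_def[symmetric] by (rule funpow_eig[OF v(2)])
    then have "norm (dt_sol A v (2 * k)) = cmod c ^ k * norm v" by (simp add: norm_smult_vec norm_power)
    moreover have "1 \<le> cmod c ^ k" using c(2) by (rule one_le_power)
    ultimately have "norm v \<le> norm (dt_sol A v (2 * k))"
      using mult_right_mono[OF \<open>1 \<le> cmod c ^ k\<close> norm_ge_zero[of v]] by simp
    with k show False by simp
  qed
next
  define B where "B = mconj A ** A"
  assume "schur (mconj A ** A)"
  then obtain C r where Cr: "0 \<le> C" "0 < r" "r < 1"
    "\<And>k x. norm ((((*v) B) ^^ k) x) \<le> C * r ^ k * norm x"
    using schur_decay unfolding B_def by blast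
  define K where "K = (\<Sum>i\<in>UNIV. \<Sum>j\<in>UNIV. cmod (mconj A $ i $ j))"
  have K: "0 \<le> K" unfolding K_def by (intro sum_nonneg) auto
  define D where "D = C * max 1 K"
  have D: "0 \<le> D" using Cr(1) K unfolding D_def by simp
  have bound: "norm (dt_sol A x t) \<le> D * r ^ (t div 2) * norm x" for x t
  proof -
    define k where "k = t div 2"
    have base: "norm ((((*v) B) ^^ k) x) \<le> C * r ^ k * norm x" by (rule Cr(4))
    have CD: "C \<le> D" unfolding D_def using Cr(1)
      by (metis max.cobounded1 mult.right_neutral mult_left_mono)
    have CK: "C * r ^ k * norm x \<le> D * r ^ k * norm x"
      using CD Cr(2) by (intro mult_right_mono) auto
    show ?thesis
    proof (cases "even t")
      case True
      then have "t = 2 * k" unfolding k_def by simp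
      then show ?thesis using base CK unfolding k_def[symmetric] by (simp add: dt_sol_even B_def)
    next
      case False
      then have t: "t = Suc (2 * k)" unfolding k_def by presburger
      have "norm (dt_sol A x t) = norm (mconj A *v vconj ((((*v) B) ^^ k) x))"
        unfolding t dt_sol_odd B_def ..
      also have "\<dots> \<le> K * norm (vconj ((((*v) B) ^^ k) x))"
        unfolding K_def by (rule matrix_vector_bound)
      also have "\<dots> \<le> K * (C * r ^ k * norm x)" using base K by (simp add: mult_left_mono)
      also have "\<dots> \<le> D * r ^ k * norm x"
      proof -
        have p: "0 \<le> C * r ^ k * norm x" using Cr(1,2) by simp
        have "K * (C * r ^ k * norm x) \<le> max 1 K * (C * r ^ k * norm x)"
          by (rule mult_right_mono[OF _ p]) simp
        then show ?thesis unfolding D_def by (simp add: algebra_simps)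
      qed
      finally show ?thesis unfolding k_def .
    qed
  qed
  have stable: "dt_stable A"
    unfolding dt_stable_def
  proof (intro allI impI)
    fix \<delta> :: real assume "0 < \<delta>"
    show "\<exists>\<epsilon>>0. \<forall>x0. norm x0 \<le> \<epsilon> \<longrightarrow> (\<forall>t. norm (dt_sol A x0 t) \<le> \<delta>)"
    proof (intro exI[of _ "\<delta> / (D + 1)"] conjI allI impI)
      show "0 < \<delta> / (D + 1)" using \<open>0 < \<delta>\<close> D by simp
      fix x0 :: "complex^'n" and t :: nat assume x0: "norm x0 \<le> \<delta> / (D + 1)"
      have "r ^ (t div 2) \<le> 1" using Cr by (simp add: power_le_one)
      then have "D * r ^ (t div 2) \<le> D" using D by (simp add: mult_left_le)
      then have "D * r ^ (t div 2) * norm x0 \<le> D * norm x0" by (simp add: mult_right_mono)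
      also have "\<dots> \<le> D * (\<delta> / (D + 1))" using mult_left_mono[OF x0 D] .
      also have "\<dots> \<le> \<delta>" using D \<open>0 < \<delta>\<close> by (simp add: field_simps)
      finally show "norm (dt_sol A x0 t) \<le> \<delta>" using bound[of x0 t] by linarith
    qed
  qed
  have "dt_sol A x0 \<longlonglongrightarrow> 0" for x0
  proof (rule Lim_null_comparison)
    show "\<forall>\<^sub>F t in sequentially. norm (dt_sol A x0 t) \<le> D * r ^ (t div 2) * norm x0"
      using bound by simp
    have "(\<lambda>t. r ^ (t div 2)) \<longlonglongrightarrow> 0" using Cr by (intro div2_tendsto) auto
    then show "(\<lambda>t. D * r ^ (t div 2) * norm x0) \<longlonglongrightarrow> 0"
      by (intro tendsto_mult_left_zero tendsto_mult_right_zero)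
  qed
  then show "dt_asymp_stable A" using stable unfolding dt_asymp_stable_def by blast
qed



lemma bl_smult_const: "bounded_linear (\<lambda>c::complex. c *s (v::complex^'n))"
proof (rule bounded_linear_intro[where K="norm v"])
  show "(x + y) *s v = x *s v + y *s v" for x y by (rule vector_sadd_rdistrib)
  show "(r *\<^sub>R x) *s v = r *\<^sub>R (x *s v)" for r x
    by (simp add: Finite_Cartesian_Product.vec_eq_iff mult_scaleR_left)
  show "norm (x *s v) \<le> norm x * norm v" for x by (simp add: norm_smult_vec)
qed

lemma bl_const_smult: "bounded_linear (\<lambda>y::complex^'n. c *s y)"
proof (rule bounded_linear_intro[where K="cmod c"])
  show "c *s (x + y) = c *s x + c *s y" for x y by (rule vector_add_ldistrib)
  show "c *s (r *\<^sub>R x) = r *\<^sub>R (c *s x)" for r x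
    by (simp add: Finite_Cartesian_Product.vec_eq_iff mult_scaleR_right)
  show "norm (c *s x) \<le> norm x * cmod c" for x by (simp add: norm_smult_vec)
qed

lemma exp_vd: "((\<lambda>t::real. exp (complex_of_real t * s)) has_vector_derivative
   s * exp (complex_of_real t * s)) (at t)"
proof -
  have "((\<lambda>z. exp (z * s)) has_field_derivative s * exp (complex_of_real t * s)) (at (complex_of_real t))"
    by (auto intro!: derivative_eq_intros)
  from has_vector_derivative_real_field[OF this] show ?thesis .
qed

lemma smult_vd:
  assumes "(f has_vector_derivative f') (at t)"
  shows "((\<lambda>t. f t *s (v::complex^'n)) has_vector_derivative f' *s v) (at t)"
  using bounded_linear.has_vector_derivative[OF bl_smult_const assms] .

lemma family_sol:
  fixes A :: "complex^'n^'n"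
  assumes ev: "(mconj A ** A) *v v = (s * s) *s v"
  defines "w \<equiv> mconj A *v vconj v"
  defines "x \<equiv> \<lambda>t::real. (s * exp (complex_of_real t * s)) *s v + exp (complex_of_real t * cnj s) *s w"
  shows "(x has_vector_derivative (mconj A *v vconj (x t))) (at t)"
proof -
  have d1: "((\<lambda>t::real. s * exp (complex_of_real t * s)) has_vector_derivative s * (s * exp (complex_of_real t * s))) (at t)"
    using bounded_linear.has_vector_derivative[OF bounded_linear_mult_right exp_vd] .
  have d2: "((\<lambda>t::real. exp (complex_of_real t * cnj s)) has_vector_derivative cnj s * exp (complex_of_real t * cnj s)) (at t)"
    by (rule exp_vd)
  have der: "(x has_vector_derivative ((s * (s * exp (complex_of_real t * s))) *s v + (cnj s * exp (complex_of_real t * cnj s)) *s w)) (at t)"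
    unfolding x_def by (intro has_vector_derivative_add smult_vd d1 d2)
  have Lw: "mconj A *v vconj w = (s * s) *s v"
    unfolding w_def vconj_mult mconj_mconj vconj_vconj matrix_vector_mul_assoc using ev .
  have "mconj A *v vconj (x t) = cnj (s * exp (complex_of_real t * s)) *s w + cnj (exp (complex_of_real t * cnj s)) *s (mconj A *v vconj w)"
    unfolding x_def vconj_add vconj_smult matrix_vector_right_distrib vector_scalar_commute w_def ..
  also have "\<dots> = (cnj s * exp (complex_of_real t * cnj s)) *s w + exp (complex_of_real t * s) *s ((s * s) *s v)"
    unfolding Lw by (simp add: exp_cnj)
  also have "\<dots> = (s * (s * exp (complex_of_real t * s))) *s v + (cnj s * exp (complex_of_real t * cnj s)) *s w"
  proof -
    have "exp (complex_of_real t * s) * (s * s) = s * (s * exp (complex_of_real t * s))" by (simp add: ac_simps)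
    then show ?thesis by (simp add: vector_smult_assoc add.commute)
  qed
  finally show ?thesis using der by simp
qed

lemma global_sol:
  fixes A :: "complex^'n^'n"
  shows "\<exists>x. x 0 \<noteq> 0 \<and> (\<forall>t. (x has_vector_derivative (mconj A *v vconj (x t))) (at t))"
proof -
  obtain \<mu> where "\<mu> \<in> eigenvalues (mconj A ** A)" using eig_nonempty by blast
  then obtain v where v: "v \<noteq> 0" "(mconj A ** A) *v v = \<mu> *s v" by (auto simp: eigenvalues_def)
  define w where "w = mconj A *v vconj v"
  define s where "s = csqrt \<mu>"
  have ss: "s * s = \<mu>" unfolding s_def by (metis power2_csqrt power2_eq_square)
  have ss2: "(- s) * (- s) = \<mu>" using ss by simp
  define X where "X = (\<lambda>s. \<lambda>t::real. (s * exp (complex_of_real t * s)) *s v + exp (complex_of_real t * cnj s) *s w)"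
  have X0: "X s 0 = s *s v + w" for s unfolding X_def by simp
  have XD: "s' * s' = \<mu> \<Longrightarrow> (X s' has_vector_derivative (mconj A *v vconj (X s' t))) (at t)" for s' t
    unfolding X_def w_def by (rule family_sol) (use v(2) in simp)
  show ?thesis
  proof (cases "X s 0 \<noteq> 0")
    case True then show ?thesis using XD[OF ss] by blast
  next
    case F1: False
    show ?thesis
    proof (cases "X (-s) 0 \<noteq> 0")
      case True then show ?thesis using XD[OF ss2] by blast
    next
      case False
      with F1 have e1: "s *s v + w = 0" and e2: "(-s) *s v + w = 0" unfolding X0 by auto
      then have "(2 * s) *s v = 0"
      proof -
        have "(2 * s) *s v = (s *s v + w) - ((-s) *s v + w)"
          by (simp add: Finite_Cartesian_Product.vec_eq_iff algebra_simps)
        then show ?thesis using e1 e2 by simp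
      qed
      then have "s = 0" using v(1) by simp
      then have w0: "w = 0" using e1 by simp
      have "((\<lambda>t::real. v) has_vector_derivative (mconj A *v vconj v)) (at t)" for t
        using w0 unfolding w_def by (simp add: has_vector_derivative_const)
      then show ?thesis using v(1) by (intro exI[of _ "\<lambda>t. v"]) auto
    qed
  qed
qed



lemma L_ii: "mconj A *v vconj (\<i> *s y) = \<i> *s (- (mconj A *v vconj (y::complex^'n)))"
proof -
  have "mconj A *v vconj (\<i> *s y) = cnj \<i> *s (mconj A *v vconj y)"
    by (simp only: vconj_smult vector_scalar_commute)
  also have "\<dots> = \<i> *s (- (mconj A *v vconj y))"
    by (simp add: Finite_Cartesian_Product.vec_eq_iff)
  finally show ?thesis .
qed

lemma ct_not: "\<not> ct_asymp_stable (A::complex^'n^'n)"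
proof
  assume as: "ct_asymp_stable A"
  obtain x where x0: "x 0 \<noteq> 0" and hx: "\<And>t. (x has_vector_derivative (mconj A *v vconj (x t))) (at t)"
    using global_sol[of A] by blast
  define y where "y = (\<lambda>t::real. \<i> *s x (- t))"
  have "(y has_vector_derivative (mconj A *v vconj (y t))) (at t)" for t
  proof -
    have m: "(uminus has_vector_derivative (-1::real)) (at t)"
      using has_vector_derivative_minus[OF has_vector_derivative_id[of "at t"]] by simp
    have "((x \<circ> uminus) has_vector_derivative (-1) *\<^sub>R (mconj A *v vconj (x (- t)))) (at t)"
      using vector_diff_chain_at[OF m hx[of "-t"]] by simp
    then have "((\<lambda>t. x (- t)) has_vector_derivative - (mconj A *v vconj (x (- t)))) (at t)"
      by (simp add: o_def)
    from bounded_linear.has_vector_derivative[OF bl_const_smult this, of \<i>]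
    show ?thesis unfolding y_def L_ii .
  qed
  then have "ct_solution A y" unfolding ct_solution_def
    by (blast intro: has_vector_derivative_at_within)
  then have "(y \<longlongrightarrow> 0) at_top" using as unfolding ct_asymp_stable_def by blast
  then have "((\<lambda>t. norm (y t)) \<longlongrightarrow> 0) at_top" using tendsto_norm_zero by blast
  then have lim: "((\<lambda>t. norm (x (- t))) \<longlongrightarrow> 0) at_top" unfolding y_def by (simp add: norm_smult_vec)
  define \<delta> where "\<delta> = norm (x 0) / 2"
  have \<delta>: "0 < \<delta>" using x0 unfolding \<delta>_def by simp
  obtain \<epsilon> where \<epsilon>: "0 < \<epsilon>" and st: "\<And>z. ct_solution A z \<Longrightarrow> norm (z 0) \<le> \<epsilon> \<Longrightarrow> \<forall>t\<ge>0. norm (z t) \<le> \<delta>"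
    using as \<delta> unfolding ct_asymp_stable_def ct_stable_def by blast
  have "\<forall>\<^sub>F t in at_top. norm (x (- t)) < \<epsilon>" using order_tendstoD(2)[OF lim \<epsilon>] .
  then obtain N where N: "\<And>t. t \<ge> N \<Longrightarrow> norm (x (- t)) < \<epsilon>"
    unfolding eventually_at_top_linorder by blast
  define T where "T = max N 0"
  have T: "T \<ge> 0" "norm (x (- T)) < \<epsilon>" using N[of T] unfolding T_def by auto
  define z where "z = (\<lambda>s. x (s - T))"
  have "(z has_vector_derivative (mconj A *v vconj (z t))) (at t)" for t
  proof -
    have m: "((\<lambda>s. s - T) has_vector_derivative (1::real)) (at t)"
      using has_vector_derivative_diff[OF has_vector_derivative_id[of "at t"] has_vector_derivative_const[of T "at t"]]
      by simp
    show ?thesis using vector_diff_chain_at[OF m hx[of "t - T"]] unfolding z_def by (simp add: o_def)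
  qed
  then have "ct_solution A z" unfolding ct_solution_def
    by (blast intro: has_vector_derivative_at_within)
  moreover have "norm (z 0) \<le> \<epsilon>" using T(2) unfolding z_def by simp
  ultimately have "norm (z T) \<le> \<delta>" using st T(1) by blast
  then have "norm (x 0) \<le> norm (x 0) / 2" unfolding z_def \<delta>_def by simp
  then show False using x0 by simp
qed

theorem corollary4:
  fixes A2 :: "complex^'n^'n"
  shows "(dt_asymp_stable A2 \<longleftrightarrow> schur (mconj A2 ** A2)) \<and> \<not> ct_asymp_stable A2"
  using dt_part ct_not by blast


end
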